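(* Let $(X,d^\star)$ be a $\star$-metric space such that every infinite subset of $X$ has an $\omega$-accumulation point in the topological space $(X,\mathscr{T}_{d^\star})$. Then $(X,d^\star)$ is totally bounded.
   Context: A $t$-definer is a function $\star:[0,\infty)\times[0,\infty)\to[0,\infty)$ such that for all $a,b,c\ge 0$: $a\star b=b\star a$; $a\star(b\star c)=(a\star b)\star c$; if $a\le b$ then $a\star c\le b\star c$; $a\star 0=a$; and $\star$ is continuous in its first variable with respect to the Euclidean topology. Given a nonempty set $X$ and a $t$-definer $\star$, a $\star$-metric on $X$ is a function $d^\star:X\times X\to[0,\infty)$ such that for all $x,y,z\in X$: $d^\star(x,y)=0$ iff $x=y$; $d^\star(x,y)=d^\star(y,x)$; and $d^\star(x,y)\le d^\star(x,z)\star d^\star(z,y)$; $(X,d^\star)$ is a $\star$-metric space. Put $B_{d^\star}(a,r)=\{x\in X: d^\star(a,x)<r\}$ and let $\mathscr{T}_{d^\star}$ be the topology consisting of all $U\subseteq X$ such that for each $a\in U$ some $B_{d^\star}(a,r)$, $r>0$, is contained in $U$. A point $x$ is an $\omega$-accumulation point of a set $A$ if every neighborhood of $x$ contains infinitely many points of $A$. $(X,d^\star)$ is totally bounded if for every $\epsilon>0$ there is a finite set $F\subseteq X$ with $X=\bigcup_{x\in F}B_{d^\star}(x,\epsilon)$. *)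

theory Defs
  imports "HOL-Analysis.Analysis"
begin

(* t-definer: an operation on [0,\<infinity>); values outside [0,\<infinity>) are irrelevant *)
definition t_definer :: "(real \<Rightarrow> real \<Rightarrow> real) \<Rightarrow> bool" where
  "t_definer st \<longleftrightarrow>
     (\<forall>a\<ge>0. \<forall>b\<ge>0. st a b \<ge> 0) \<and>
     (\<forall>a\<ge>0. \<forall>b\<ge>0. st a b = st b a) \<and>
     (\<forall>a\<ge>0. \<forall>b\<ge>0. \<forall>c\<ge>0. st a (st b c) = st (st a b) c) \<and>
     (\<forall>a\<ge>0. \<forall>b\<ge>0. \<forall>c\<ge>0. a \<le> b \<longrightarrow> st a c \<le> st b c) \<and>
     (\<forall>a\<ge>0. st a 0 = a) \<and>
     (\<forall>c\<ge>0. continuous_on {0..} (\<lambda>a. st a c))"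

definition star_metric :: "'a set \<Rightarrow> (real \<Rightarrow> real \<Rightarrow> real) \<Rightarrow> ('a \<Rightarrow> 'a \<Rightarrow> real) \<Rightarrow> bool" where
  "star_metric X st d \<longleftrightarrow> X \<noteq> {} \<and> t_definer st \<and>
     (\<forall>x\<in>X. \<forall>y\<in>X. d x y \<ge> 0) \<and>
     (\<forall>x\<in>X. \<forall>y\<in>X. d x y = 0 \<longleftrightarrow> x = y) \<and>
     (\<forall>x\<in>X. \<forall>y\<in>X. d x y = d y x) \<and>
     (\<forall>x\<in>X. \<forall>y\<in>X. \<forall>z\<in>X. d x y \<le> st (d x z) (d z y))"

definition sball :: "'a set \<Rightarrow> ('a \<Rightarrow> 'a \<Rightarrow> real) \<Rightarrow> 'a \<Rightarrow> real \<Rightarrow> 'a set" where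
  "sball X d a r = {x\<in>X. d a x < r}"

definition sopen :: "'a set \<Rightarrow> ('a \<Rightarrow> 'a \<Rightarrow> real) \<Rightarrow> 'a set \<Rightarrow> bool" where
  "sopen X d U \<longleftrightarrow> U \<subseteq> X \<and> (\<forall>a\<in>U. \<exists>r>0. sball X d a r \<subseteq> U)"

definition omega_acc :: "'a set \<Rightarrow> ('a \<Rightarrow> 'a \<Rightarrow> real) \<Rightarrow> 'a \<Rightarrow> 'a set \<Rightarrow> bool" where
  "omega_acc X d x A \<longleftrightarrow> x \<in> X \<and>
     (\<forall>N. (\<exists>U. sopen X d U \<and> x \<in> U \<and> U \<subseteq> N) \<longrightarrow> infinite (N \<inter> A))"

definition stotally_bounded :: "'a set \<Rightarrow> ('a \<Rightarrow> 'a \<Rightarrow> real) \<Rightarrow> bool" where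
  "stotally_bounded X d \<longleftrightarrow>
     (\<forall>e>0. \<exists>F. finite F \<and> F \<subseteq> X \<and> X = (\<Union>x\<in>F. sball X d x e))"

end

theory Submission
  imports Defs
begin

lemma smT: "star_metric X st d \<Longrightarrow> t_definer st"
  by (simp add: star_metric_def)
lemma smN: "star_metric X st d \<Longrightarrow> x \<in> X \<Longrightarrow> y \<in> X \<Longrightarrow> 0 \<le> d x y"
proof -
  assume "star_metric X st d" "x \<in> X" "y \<in> X"
  then have "\<forall>x\<in>X. \<forall>y\<in>X. d x y \<ge> 0" unfolding star_metric_def by (elim conjE)
  then show ?thesis using \<open>x \<in> X\<close> \<open>y \<in> X\<close> by simp
qed
lemma smZ: "star_metric X st d \<Longrightarrow> x \<in> X \<Longrightarrow> d x x = 0"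
proof -
  assume "star_metric X st d" "x \<in> X"
  then have "\<forall>x\<in>X. \<forall>y\<in>X. d x y = 0 \<longleftrightarrow> x = y" unfolding star_metric_def by (elim conjE)
  then show ?thesis using \<open>x \<in> X\<close> by simp
qed
lemma smS: "star_metric X st d \<Longrightarrow> x \<in> X \<Longrightarrow> y \<in> X \<Longrightarrow> d x y = d y x"
proof -
  assume "star_metric X st d" "x \<in> X" "y \<in> X"
  then have "\<forall>x\<in>X. \<forall>y\<in>X. d x y = d y x" unfolding star_metric_def by (elim conjE)
  then show ?thesis using \<open>x \<in> X\<close> \<open>y \<in> X\<close> by blast
qed
lemma smTri: "star_metric X st d \<Longrightarrow> x \<in> X \<Longrightarrow> y \<in> X \<Longrightarrow> z \<in> X \<Longrightarrow> d x y \<le> st (d x z) (d z y)"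
proof -
  assume "star_metric X st d" "x \<in> X" "y \<in> X" "z \<in> X"
  then have "\<forall>x\<in>X. \<forall>y\<in>X. \<forall>z\<in>X. d x y \<le> st (d x z) (d z y)" unfolding star_metric_def by (elim conjE)
  then show ?thesis using \<open>x \<in> X\<close> \<open>y \<in> X\<close> \<open>z \<in> X\<close> by blast
qed
lemma tC: "t_definer st \<Longrightarrow> 0 \<le> a \<Longrightarrow> 0 \<le> b \<Longrightarrow> st a b = st b a"
proof -
  assume "t_definer st" "0 \<le> a" "0 \<le> b"
  then have "\<forall>a\<ge>0. \<forall>b\<ge>0. st a b = st b a" unfolding t_definer_def by (elim conjE)
  then show ?thesis using \<open>0 \<le> a\<close> \<open>0 \<le> b\<close> by simp
qed

lemma cont_small:
  assumes T: "t_definer st" and u: "u \<ge> 0" "u < r"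
  shows "\<exists>s>0. \<forall>b. 0 \<le> b \<and> b < s \<longrightarrow> st b u < r"
proof -
  have "\<forall>c\<ge>0. continuous_on {0..} (\<lambda>a. st a c)" using T unfolding t_definer_def by (elim conjE)
  then have c: "continuous_on {0..} (\<lambda>a. st a u)" using u by blast
  have "\<forall>a\<ge>0. st a 0 = a" using T unfolding t_definer_def by (elim conjE)
  then have "st u 0 = u" using u by simp
  then have z: "st 0 u = u" using tC[OF T _ u(1), of 0] by simp
  from c[unfolded continuous_on_iff] obtain s where s: "s > 0"
    "\<forall>x'\<in>{0..}. dist x' 0 < s \<longrightarrow> dist (st x' u) (st 0 u) < r - u"
    using u by (metis atLeast_iff diff_gt_0_iff_gt order_refl)
  show ?thesis
  proof (intro exI[of _ s] conjI allI impI)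
    fix b assume b: "0 \<le> b \<and> b < s"
    then have "dist (st b u) u < r - u" using s z by (auto simp: dist_real_def)
    then show "st b u < r" by (auto simp: dist_real_def)
  qed (use s in auto)
qed

lemma sball_open:
  assumes M: "star_metric X st d" and xX: "x \<in> X"
  shows "sopen X d (sball X d x r)"
  unfolding sopen_def
proof (intro conjI ballI)
  show "sball X d x r \<subseteq> X" by (auto simp: sball_def)
next
  fix a assume a: "a \<in> sball X d x r"
  have T: "t_definer st" using M by (simp add: star_metric_def)
  have ax: "a \<in> X" "d x a < r" using a by (auto simp: sball_def)
  have u0: "d x a \<ge> 0" using M ax xX by (simp add: star_metric_def)
  obtain s where s: "s > 0" "\<forall>b. 0 \<le> b \<and> b < s \<longrightarrow> st b (d x a) < r"
    using cont_small[OF T u0 ax(2)] by blast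
  show "\<exists>s>0. sball X d a s \<subseteq> sball X d x r"
  proof (intro exI[of _ s] conjI subsetI)
    fix y assume y: "y \<in> sball X d a s"
    then have yX: "y \<in> X" and ay: "d a y < s" by (auto simp: sball_def)
    have ay0: "d a y \<ge> 0" using M ax yX by (simp add: star_metric_def)
    have "d x y \<le> st (d x a) (d a y)" using smTri[OF M xX yX ax(1)] .
    also have "\<dots> = st (d a y) (d x a)" using tC[OF T u0 ay0] .
    also have "\<dots> < r" using s ay ay0 by blast
    finally show "y \<in> sball X d x r" using yX by (simp add: sball_def)
  qed (use s in auto)
qed

theorem theorem3p2:
  fixes X :: "'a set" and st :: "real \<Rightarrow> real \<Rightarrow> real" and d :: "'a \<Rightarrow> 'a \<Rightarrow> real"
  assumes "star_metric X st d"
    and "\<forall>A. A \<subseteq> X \<and> infinite A \<longrightarrow> (\<exists>x\<in>X. omega_acc X d x A)"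
  shows "stotally_bounded X d"
proof (rule ccontr)
  note M = assms(1)
  have T: "t_definer st" using M by (simp add: star_metric_def)
  assume "\<not> stotally_bounded X d"
  then obtain e where e: "e > 0" and nF: "\<And>F. finite F \<Longrightarrow> F \<subseteq> X \<Longrightarrow> X \<noteq> (\<Union>x\<in>F. sball X d x e)"
  proof -
    from \<open>\<not> stotally_bounded X d\<close> obtain e where "e > 0"
      "\<not> (\<exists>F. finite F \<and> F \<subseteq> X \<and> X = (\<Union>x\<in>F. sball X d x e))"
      unfolding stotally_bounded_def by auto
    then show ?thesis using that by auto
  qed
  define P where "P = (\<lambda>(n::nat) S. finite S \<and> S \<subseteq> X \<and> card S = n \<and>
      (\<forall>a\<in>S. \<forall>b\<in>S. a \<noteq> b \<longrightarrow> e \<le> d a b))"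
  have step: "\<exists>T. P (Suc n) T \<and> S \<subseteq> T" if PS: "P n S" for n S
  proof -
    have S: "finite S" "S \<subseteq> X" "card S = n" "\<forall>a\<in>S. \<forall>b\<in>S. a \<noteq> b \<longrightarrow> e \<le> d a b"
      using PS by (auto simp: P_def)
    have "(\<Union>x\<in>S. sball X d x e) \<subseteq> X" by (auto simp: sball_def)
    with nF[OF S(1,2)] obtain y where y: "y \<in> X" "\<forall>z\<in>S. \<not> d z y < e"
      by (auto simp: sball_def)
    have yS: "y \<notin> S"
    proof
      assume "y \<in> S" then have "d y y \<ge> e" using y by force
      moreover have "d y y = 0" using M y by (simp add: star_metric_def)
      ultimately show False using e by simp
    qed
    have sym: "\<forall>a\<in>X. \<forall>b\<in>X. d a b = d b a" using M by (simp add: star_metric_def)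
    have "P (Suc n) (insert y S)"
      unfolding P_def
    proof (intro conjI ballI impI)
      show "finite (insert y S)" using S by simp
      show "insert y S \<subseteq> X" using S y by simp
      show "card (insert y S) = Suc n" using S yS by simp
      fix a b assume ab: "a \<in> insert y S" "b \<in> insert y S" "a \<noteq> b"
      show "e \<le> d a b"
      proof (cases "a = y")
        case True
        then have "b \<in> S" using ab by auto
        then show ?thesis using True y S(2) smS[OF M] by (metis not_le subsetD)
      next
        case False
        then have aS: "a \<in> S" using ab by auto
        show ?thesis
        proof (cases "b = y")
          case True then show ?thesis using aS y by (metis not_le)
        next
          case False then show ?thesis using aS ab S(4) by auto
        qed
      qed
    qed
    then show ?thesis by blast
  qed
  have "P 0 {}" by (simp add: P_def)
  then have ex0: "\<exists>x. P 0 x" by (rule exI)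
  have "\<exists>f. \<forall>n. P n (f n) \<and> f n \<subseteq> f (Suc n)"
  proof (rule dependent_nat_choice)
    show "\<exists>x. P 0 x" by (rule ex0)
    fix x n assume "P n x"
    then show "\<exists>y. P (Suc n) y \<and> x \<subseteq> y" by (rule step)
  qed
  then obtain f where f0: "\<forall>n. P n (f n) \<and> f n \<subseteq> f (Suc n)" by (elim exE)
  have f: "\<And>n. P n (f n)" "\<And>n. f n \<subseteq> f (Suc n)" using f0 by simp_all
  have mono: "f m \<subseteq> f n" if "m \<le> n" for m n
    using lift_Suc_mono_le[of f, OF f(2) that] .
  define A where "A = (\<Union>n. f n)"
  have AX: "A \<subseteq> X" using f(1) by (auto simp: A_def P_def)
  have sep: "e \<le> d a b" if ab: "a \<in> A" "b \<in> A" "a \<noteq> b" for a b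
  proof -
    obtain i where "a \<in> f i" using ab(1) unfolding A_def by blast
    moreover obtain j where "b \<in> f j" using ab(2) unfolding A_def by blast
    ultimately
    have "a \<in> f (max i j)" "b \<in> f (max i j)" using mono by (meson max.cobounded1 max.cobounded2 subsetD)+
    then show ?thesis using f(1)[of "max i j"] ab by (auto simp: P_def)
  qed
  have infA: "infinite A"
  proof
    assume fin: "finite A"
    have "card (f (Suc (card A))) \<le> card A"
      using card_mono[OF fin] by (auto simp: A_def)
    then show False using f(1)[of "Suc (card A)"] by (simp add: P_def)
  qed
  obtain x where xX: "x \<in> X" and acc: "omega_acc X d x A" using assms(2) AX infA by blast
  have inf_ball: "infinite (sball X d x r \<inter> A)" if "r > 0" for r
  proof -
    have "x \<in> sball X d x r" using smZ[OF M xX] xX that by (simp add: sball_def)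
    then show ?thesis using acc sball_open[OF M xX, of r] unfolding omega_acc_def by blast
  qed
  obtain a where a: "a \<in> sball X d x e \<inter> A" using inf_ball[OF e] by (metis finite.emptyI ex_in_conv)
  have aX: "a \<in> X" and xa: "d x a < e" and aA: "a \<in> A" using a by (auto simp: sball_def)
  have u0: "d x a \<ge> 0" using M aX xX by (simp add: star_metric_def)
  obtain s where s: "s > 0" "\<forall>b. 0 \<le> b \<and> b < s \<longrightarrow> st b (d x a) < e"
    using cont_small[OF T u0 xa] by blast
  have "infinite (sball X d x s \<inter> A - {a})" using inf_ball[OF s(1)] by simp
  then obtain b where b: "b \<in> sball X d x s \<inter> A - {a}" by (metis finite.emptyI ex_in_conv)
  have bX: "b \<in> X" and xb: "d x b < s" and bA: "b \<in> A" and ba: "b \<noteq> a" using b by (auto simp: sball_def)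
  have b0: "d x b \<ge> 0" using M bX xX by (simp add: star_metric_def)
  have "d a b \<le> st (d a x) (d x b)" using smTri[OF M aX bX xX] .
  also have "\<dots> = st (d x a) (d x b)" using smS[OF M aX xX] by simp
  also have "\<dots> = st (d x b) (d x a)" using tC[OF T u0 b0] .
  also have "\<dots> < e" using s xb b0 by blast
  finally have "d a b < e" .
  moreover have "e \<le> d a b" using sep aA bA ba by metis
  ultimately show False by simp
qed

end
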